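(* Let $n,T\in\mathbb{N}$ and let real numbers $r_{it}$, $i\in\{1,\ldots,n\}$, $t\in\{1,\ldots,T\}$, be given. Consider the random return vector $\boldsymbol{r}=(r_1,\ldots,r_n)^{\mathsf T}$ which takes the value $(r_{1t},\ldots,r_{nt})^{\mathsf T}$ in scenario $t$, each scenario having probability $1/T$, and let $\mu_i=\frac1T\sum_{t=1}^T r_{it}$, $\boldsymbol{\mu}=(\mu_1,\ldots,\mu_n)^{\mathsf T}$. Define $\mathrm{MAD}(\boldsymbol{x})=\mathbb{E}\big[|(\boldsymbol{r}-\boldsymbol{\mu})^{\mathsf T}\boldsymbol{x}|\big]=\frac1T\sum_{t=1}^T|\sum_{i=1}^n (r_{it}-\mu_i)x_i|$ for $\boldsymbol{x}\in\mathbb{R}^n$, with convex subdifferential $\partial\mathrm{MAD}(\boldsymbol{x})$. Let $\Delta^{n-1}=\{\boldsymbol{x}\in\mathbb{R}^n: x_i\ge0\ \forall i,\ \sum_i x_i=1\}$, and call $\boldsymbol{x}\in\Delta^{n-1}$ a MAD-RP portfolio if there exist $\boldsymbol{s}\in\partial\mathrm{MAD}(\boldsymbol{x})$ and $\lambda\in\mathbb{R}$ with $x_is_i=\lambda$ for all $i$. Suppose that the only vector $\boldsymbol{x}\in\mathbb{R}^n_+$ with $\sum_{i}(r_{it}-\mu_i)x_i=0$ for every $t$ is $\boldsymbol{x}=0$, and suppose moreover that $$(r_{it}-\mu_i)(r_{jt}-\mu_j)\geq 0\quad\text{for every } t\in\{1,\ldots,T\} \text{ and } i,j\in\{1,\ldots,n\},\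 i\neq j.$$ Then the unique MAD-RP portfolio is given by $$x_i=\frac{\mathbb{E}[|r_i-\mu_i|]^{-1}}{\sum_{j=1}^n\mathbb{E}[|r_j-\mu_j|]^{-1}},\qquad i\in\{1,\ldots,n\}.$$
   Context: $\mathbb{R}^n_+$ denotes the set of vectors in $\mathbb{R}^n$ with all components nonnegative; $\mathbb{E}[|r_i-\mu_i|]=\frac1T\sum_{t=1}^T|r_{it}-\mu_i|$. *)

theory Defs
  imports "HOL-Analysis.Analysis"
begin

text \<open>Scenario returns: r t i is the return of asset i in scenario t; scenarios
  range over a finite type 't (T = CARD('t)), assets over a finite type 'n (n = CARD('n)).\<close>

definition mean_ret :: "('t::finite \<Rightarrow> 'n::finite \<Rightarrow> real) \<Rightarrow> 'n \<Rightarrow> real" where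
  "mean_ret r i = (\<Sum>t\<in>UNIV. r t i) / real CARD('t)"

definition MAD :: "('t::finite \<Rightarrow> 'n::finite \<Rightarrow> real) \<Rightarrow> real^'n \<Rightarrow> real" where
  "MAD r x = (\<Sum>t\<in>UNIV. \<bar>\<Sum>i\<in>UNIV. (r t i - mean_ret r i) * x $ i\<bar>) / real CARD('t)"

definition abs_dev :: "('t::finite \<Rightarrow> 'n::finite \<Rightarrow> real) \<Rightarrow> 'n \<Rightarrow> real" where
  "abs_dev r i = (\<Sum>t\<in>UNIV. \<bar>r t i - mean_ret r i\<bar>) / real CARD('t)"

definition subdiff :: "(real^'n \<Rightarrow> real) \<Rightarrow> real^'n \<Rightarrow> (real^'n) set" where
  "subdiff f x = {s. \<forall>y. f y \<ge> f x + s \<bullet> (y - x)}"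

definition prob_simplex :: "(real^'n) set" where
  "prob_simplex = {x. (\<forall>i. x $ i \<ge> 0) \<and> (\<Sum>i\<in>UNIV. x $ i) = 1}"

definition MAD_RP :: "('t::finite \<Rightarrow> 'n::finite \<Rightarrow> real) \<Rightarrow> real^'n \<Rightarrow> bool" where
  "MAD_RP r x \<longleftrightarrow> x \<in> prob_simplex \<and>
     (\<exists>s \<in> subdiff (MAD r) x. \<exists>lam::real. \<forall>i. x $ i * s $ i = lam)"

end

theory Submission
  imports Defs
begin

lemma row_sign:
  fixes d :: "'n::finite \<Rightarrow> real"
  assumes c: "\<And>i j. i \<noteq> j \<Longrightarrow> d i * d j \<ge> 0"
  shows "(\<forall>i. d i \<ge> 0) \<or> (\<forall>i. d i \<le> 0)"
proof (rule ccontr)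
  assume "\<not> ?thesis"
  then obtain i j where "d i < 0" "d j > 0" by (auto simp: not_le)
  moreover then have "i \<noteq> j" by auto
  ultimately show False using c[of i j] mult_neg_pos[of "d i" "d j"] by linarith
qed

lemma row_le:
  fixes d :: "'n::finite \<Rightarrow> real"
  assumes c: "\<And>i j. i \<noteq> j \<Longrightarrow> d i * d j \<ge> 0"
  shows "(\<Sum>i\<in>UNIV. \<bar>d i\<bar> * y i) \<le> \<bar>\<Sum>i\<in>UNIV. d i * y i\<bar>"
    and "(\<forall>i. y i \<ge> 0) \<Longrightarrow> (\<Sum>i\<in>UNIV. \<bar>d i\<bar> * y i) = \<bar>\<Sum>i\<in>UNIV. d i * y i\<bar>"
proof -
  have "(\<forall>i. d i \<ge> 0) \<or> (\<forall>i. d i \<le> 0)" by (rule row_sign[OF c])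
  then have "((\<Sum>i\<in>UNIV. \<bar>d i\<bar> * y i) = (\<Sum>i\<in>UNIV. d i * y i)) \<and> (\<forall>i. d i \<ge> 0) \<or>
     ((\<Sum>i\<in>UNIV. \<bar>d i\<bar> * y i) = - (\<Sum>i\<in>UNIV. d i * y i)) \<and> (\<forall>i. d i \<le> 0)"
    by (auto simp: sum_negf[symmetric] intro!: sum.cong)
  then show "(\<Sum>i\<in>UNIV. \<bar>d i\<bar> * y i) \<le> \<bar>\<Sum>i\<in>UNIV. d i * y i\<bar>" by linarith
  assume y: "\<forall>i. y i \<ge> 0"
  show "(\<Sum>i\<in>UNIV. \<bar>d i\<bar> * y i) = \<bar>\<Sum>i\<in>UNIV. d i * y i\<bar>"
  proof (cases "\<forall>i. d i \<ge> 0")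
    case True
    then have "(\<Sum>i\<in>UNIV. d i * y i) \<ge> 0" using y by (intro sum_nonneg) auto
    then show ?thesis using True by (auto intro!: sum.cong)
  next
    case False
    with \<open>(\<forall>i. d i \<ge> 0) \<or> _\<close> have n: "\<forall>i. d i \<le> 0" by blast
    then have "(\<Sum>i\<in>UNIV. d i * y i) \<le> 0" using y by (intro sum_nonpos) (auto simp: mult_nonpos_nonneg)
    then show ?thesis using n by (auto simp: sum_negf[symmetric] intro!: sum.cong)
  qed
qed

lemma sum_axis: fixes f :: "'n::finite \<Rightarrow> real"
  shows "(\<Sum>j\<in>UNIV. f j * (\<chi> j. if j = i then 1 else 0) $ j) = f i"
proof -
  have "(\<Sum>j\<in>UNIV. f j * (\<chi> j. if j = i then 1 else 0) $ j) = (\<Sum>j\<in>UNIV. if j = i then f j else 0)"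
    by (rule sum.cong) auto
  also have "\<dots> = f i" by simp
  finally show ?thesis .
qed

lemma axis_nz: "((\<chi> j. if j = i then 1 else 0)::real^'n) \<noteq> 0"
proof
  assume "((\<chi> j. if j = i then 1 else 0)::real^'n) = 0"
  then have "((\<chi> j. if j = i then 1 else 0)::real^'n) $ i = 0 $ i" by simp
  then show False by simp
qed

theorem proposition3:
  fixes r :: "'t::finite \<Rightarrow> 'n::finite \<Rightarrow> real"
  assumes nondeg: "\<And>x::real^'n. (\<forall>i. x $ i \<ge> 0) \<Longrightarrow>
      (\<forall>t. (\<Sum>i\<in>UNIV. (r t i - mean_ret r i) * x $ i) = 0) \<Longrightarrow> x = 0"
    and comon: "\<And>t i j. i \<noteq> j \<Longrightarrow> (r t i - mean_ret r i) * (r t j - mean_ret r j) \<ge> 0"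
  shows "{x. MAD_RP r x} =
    {\<chi> i. inverse (abs_dev r i) / (\<Sum>j\<in>UNIV. inverse (abs_dev r j))}"
proof -
  define d where "d t i = r t i - mean_ret r i" for t i
  define a where "a = (\<chi> i. abs_dev r i)"
  define T where "T = real CARD('t)"
  have Tpos: "T > 0" unfolding T_def by simp
  have c: "\<And>t i j. i \<noteq> j \<Longrightarrow> d t i * d t j \<ge> 0" using comon unfolding d_def by blast
  have MADd: "MAD r y = (\<Sum>t\<in>UNIV. \<bar>\<Sum>i\<in>UNIV. d t i * y $ i\<bar>) / T" for y
    unfolding MAD_def d_def T_def by simp
  have ady: "a \<bullet> y = (\<Sum>t\<in>UNIV. \<Sum>i\<in>UNIV. \<bar>d t i\<bar> * y $ i) / T" for y
  proof -
    have "a \<bullet> y = (\<Sum>i\<in>UNIV. (\<Sum>t\<in>UNIV. \<bar>d t i\<bar>) / T * y $ i)"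
      unfolding a_def inner_vec_def abs_dev_def d_def T_def by simp
    also have "\<dots> = (\<Sum>i\<in>UNIV. \<Sum>t\<in>UNIV. \<bar>d t i\<bar> * y $ i) / T"
      by (simp add: sum_divide_distrib sum_distrib_right)
    also have "\<dots> = (\<Sum>t\<in>UNIV. \<Sum>i\<in>UNIV. \<bar>d t i\<bar> * y $ i) / T"
      by (rule arg_cong[where f="\<lambda>z. z / T"], rule sum.swap)
    finally show ?thesis .
  qed
  have MADge: "a \<bullet> y \<le> MAD r y" for y
    unfolding ady MADd using Tpos
    by (intro divide_right_mono sum_mono row_le(1)[OF c]) auto
  have MADeq: "(\<forall>i. y $ i \<ge> 0) \<Longrightarrow> MAD r y = a \<bullet> y" for y
    unfolding ady MADd using Tpos
    by (intro arg_cong2[where f="(/)"] sum.cong row_le(2)[OF c, symmetric]) auto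
  have apos: "a $ i > 0" for i
  proof -
    define e :: "real^'n" where "e = (\<chi> j. if j = i then 1 else 0)"
    have "e \<noteq> 0" unfolding e_def by (rule axis_nz)
    moreover have "\<forall>j. e $ j \<ge> 0" by (simp add: e_def)
    ultimately have "\<not> (\<forall>t. (\<Sum>j\<in>UNIV. (r t j - mean_ret r j) * e $ j) = 0)"
      using nondeg[of e] by blast
    then obtain t where "(\<Sum>j\<in>UNIV. (r t j - mean_ret r j) * e $ j) \<noteq> 0" by blast
    then have "d t i \<noteq> 0" unfolding e_def sum_axis d_def .
    then have "0 < (\<Sum>t\<in>UNIV. \<bar>d t i\<bar>)"
      by (intro sum_pos2[of UNIV t]) auto
    then show ?thesis unfolding a_def abs_dev_def d_def T_def by simp
  qed
  define S where "S = (\<Sum>j\<in>UNIV. inverse (a $ j))"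
  have Spos: "S > 0" unfolding S_def using apos
    by (intro sum_pos) auto
  define xs :: "real^'n" where "xs = (\<chi> i. inverse (a $ i) / S)"
  have xs_eq: "xs = (\<chi> i. inverse (abs_dev r i) / (\<Sum>j\<in>UNIV. inverse (abs_dev r j)))"
    unfolding xs_def S_def a_def by simp
  have "MAD_RP r x \<longleftrightarrow> x = xs" for x
  proof
    assume "x = xs"
    have xpos: "\<forall>i. xs $ i \<ge> 0" unfolding xs_def using apos Spos by (auto intro!: divide_nonneg_pos less_imp_le)
    have "xs \<in> prob_simplex" unfolding prob_simplex_def using xpos
      by (simp add: xs_def S_def[symmetric] sum_divide_distrib[symmetric] Spos less_imp_neq[OF Spos, symmetric])
    moreover have "a \<in> subdiff (MAD r) xs"
      unfolding subdiff_def using MADeq[OF xpos] MADge by (auto simp: inner_diff_right)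
    moreover have "\<forall>i. xs $ i * a $ i = 1 / S"
      unfolding xs_def using apos Spos by (auto simp: field_simps less_imp_neq[OF apos, symmetric])
    ultimately show "MAD_RP r x" unfolding MAD_RP_def \<open>x = xs\<close> by blast
  next
    assume "MAD_RP r x"
    then obtain s lam where xsimp: "x \<in> prob_simplex" and s: "s \<in> subdiff (MAD r) x"
      and lam: "\<And>i. x $ i * s $ i = lam"
      unfolding MAD_RP_def by blast
    have xnn: "\<forall>i. x $ i \<ge> 0" and xsum: "(\<Sum>i\<in>UNIV. x $ i) = 1"
      using xsimp unfolding prob_simplex_def by auto
    have sub: "MAD r y \<ge> MAD r x + s \<bullet> (y - x)" for y using s unfolding subdiff_def by blast
    have MAD0: "MAD r 0 = 0" unfolding MAD_def by simp
    have sx: "s \<bullet> x \<ge> a \<bullet> x" using sub[of 0] MAD0 MADeq[OF xnn] by simp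
    have sle: "s $ i \<le> a $ i" for i
    proof -
      define e :: "real^'n" where "e = (\<chi> j. if j = i then 1 else 0)"
      have "\<forall>j. (x + e) $ j \<ge> 0" using xnn by (auto simp: e_def)
      then have "MAD r (x + e) = a \<bullet> x + a \<bullet> e" using MADeq by (simp add: inner_add_right)
      moreover have "a \<bullet> e = a $ i" "s \<bullet> e = s $ i"
        unfolding e_def inner_vec_def inner_real_def by (rule sum_axis)+
      ultimately show ?thesis using sub[of "x + e"] MADeq[OF xnn] by simp
    qed
    have term_le: "x $ i * s $ i \<le> x $ i * a $ i" for i
      using sle xnn by (simp add: mult_left_mono)
    have sx': "(\<Sum>i\<in>UNIV. x $ i * s $ i) \<ge> (\<Sum>i\<in>UNIV. x $ i * a $ i)"
      using sx by (simp add: inner_vec_def mult.commute)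
    obtain k where "x $ k \<noteq> 0" using xsum by (metis sum.neutral zero_neq_one)
    then have xk: "x $ k > 0" using xnn by (simp add: less_le)
    have axpos: "(\<Sum>i\<in>UNIV. x $ i * a $ i) > 0"
      using xk apos xnn by (intro sum_pos2[of UNIV k]) (auto intro: mult_nonneg_nonneg less_imp_le)
    have "(\<Sum>i\<in>UNIV. x $ i * s $ i) = real CARD('n) * lam" using lam by simp
    with sx' axpos have "0 < real CARD('n) * lam" by linarith
    then have lampos: "lam > 0" by (rule zero_less_mult_pos) simp
    have eqs: "x $ i * s $ i = x $ i * a $ i" for i
    proof (rule ccontr)
      assume "x $ i * s $ i \<noteq> x $ i * a $ i"
      then have "x $ i * s $ i < x $ i * a $ i" using term_le[of i] by linarith
      then have "(\<Sum>i\<in>UNIV. x $ i * s $ i) < (\<Sum>i\<in>UNIV. x $ i * a $ i)"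
        using term_le by (intro sum_strict_mono_ex1) auto
      with sx' show False by simp
    qed
    have xi: "x $ i = lam / a $ i" for i
    proof -
      have "x $ i * a $ i = lam" using eqs[of i] lam[of i] by simp
      then show ?thesis using apos[of i] by (simp add: eq_divide_eq)
    qed
    have "1 = lam * S" using xsum unfolding S_def xi
      by (simp add: sum_distrib_left field_simps)
    then have "lam = 1 / S" using Spos by (simp add: field_simps)
    then show "x = xs" unfolding xs_def using xi
      by (simp add: vec_eq_iff field_simps)
  qed
  then show ?thesis unfolding xs_eq[symmetric] by auto
qed

end
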